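(* Let $\sigma_w^2=0$. Then $(\alpha,\sigma^2)=(1,0)$ is a fixed point of the complex SE map, i.e. $\psi_1(1,0)=1$ and $\psi_2(1,0;\delta,0)=0$ for every $\delta>0$. Moreover: (a) if $\delta>2$, there exist constants $\epsilon_1>0$, $\epsilon_2>0$ such that for every real $\alpha_0\in(1-\epsilon_1,1)$ and every $\sigma_0^2\in(0,\epsilon_2)$ the SE sequences satisfy $\alpha_t\to1$ and $\sigma_t^2\to0$; (b) if $\delta<2$, the SE sequences cannot converge to $(1,0)$ unless $(\alpha_0,\sigma_0^2)=(1,0)$.
   Context: Complex state evolution (SE). Fix $\delta>0$ and $\sigma_w^2\ge0$. For $\alpha\in\mathbb{C}$ and $\sigma^2\ge0$ with $(\alpha,\sigma^2)\neq(0,0)$, let $\theta_\alpha$ be the argument of $\alpha$ ($\theta_0:=0$) and define $$\psi_1(\alpha,\sigma^2)=e^{\mathrm{i}\theta_\alpha}\int_0^{\pi/2}\frac{|\alpha|\sin^2\theta}{(|\alpha|^2\sin^2\theta+\sigma^2)^{1/2}}\,d\theta,$$ $$\psi_2(\alpha,\sigma^2;\delta,\sigma_w^2)=\frac4\delta\Big(|\alpha|^2+\sigma^2+1-\int_0^{\pi/2}\frac{2|\alpha|^2\sin^2\theta+\sigma^2}{(|\alpha|^2\sin^2\theta+\sigma^2)^{1/2}}\,d\theta\Big)+4\sigma_w^2 .$$ Given $(\alpha_0,\sigma_0^2)$, the SE sequences are defined by $\alpha_{t+1}=\psi_1(\alpha_t,\sigma_t^2)$, $\sigma_{t+1}^2=\psi_2(\alpha_t,\sigma_t^2;\delta,\sigma_w^2)$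 for $t\ge0$. *)

theory Defs
  imports "HOL-Analysis.Analysis"
begin

text \<open>Complex state evolution maps. The phase factor e^{i theta_alpha} is cis (Arg alpha);
  note Arg 0 = 0, matching the convention theta_0 = 0.\<close>

definition psi1 :: "complex \<Rightarrow> real \<Rightarrow> complex" where
  "psi1 \<alpha> s2 = cis (Arg \<alpha>) *
     complex_of_real (integral {0..pi/2}
        (\<lambda>\<theta>. cmod \<alpha> * (sin \<theta>)\<^sup>2 / sqrt ((cmod \<alpha>)\<^sup>2 * (sin \<theta>)\<^sup>2 + s2)))"

definition psi2 :: "complex \<Rightarrow> real \<Rightarrow> real \<Rightarrow> real \<Rightarrow> real" where
  "psi2 \<alpha> s2 \<delta> sw2 = 4 / \<delta> * ((cmod \<alpha>)\<^sup>2 + s2 + 1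
      - integral {0..pi/2}
          (\<lambda>\<theta>. (2 * (cmod \<alpha>)\<^sup>2 * (sin \<theta>)\<^sup>2 + s2) / sqrt ((cmod \<alpha>)\<^sup>2 * (sin \<theta>)\<^sup>2 + s2)))
      + 4 * sw2"

primrec se :: "real \<Rightarrow> real \<Rightarrow> complex \<Rightarrow> real \<Rightarrow> nat \<Rightarrow> complex \<times> real" where
  "se \<delta> sw2 \<alpha>0 s0 0 = (\<alpha>0, s0)"
| "se \<delta> sw2 \<alpha>0 s0 (Suc t) =
     (psi1 (fst (se \<delta> sw2 \<alpha>0 s0 t)) (snd (se \<delta> sw2 \<alpha>0 s0 t)),
      psi2 (fst (se \<delta> sw2 \<alpha>0 s0 t)) (snd (se \<delta> sw2 \<alpha>0 s0 t)) \<delta> sw2)"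

end

theory Submission
  imports Defs
begin

lemma ftc:
  fixes F f :: "real \<Rightarrow> real"
  assumes "a \<le> b" "\<And>x. x \<in> {a..b} \<Longrightarrow> (F has_real_derivative f x) (at x)"
  shows "(f has_integral F b - F a) {a..b}"
  by (rule fundamental_theorem_of_calculus)
     (use assms in \<open>auto simp: has_real_derivative_iff_has_vector_derivative[symmetric] intro: has_field_derivative_at_within\<close>)

lemma int_sin: "((\<lambda>t. sin t) has_integral 1) {0..pi/2}"
proof -
  have "((\<lambda>t. sin t) has_integral (- cos (pi/2)) - (- cos 0)) {0..pi/2}"
    by (rule ftc) (auto intro!: derivative_eq_intros)
  then show ?thesis by simp
qed


lemma alg:
  fixes p R S C a s :: real
  assumes "p^2 = a^2*S^2 + s" "R^2 = a^2 + s" "S^2 + C^2 = 1"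
  shows "s*(C^2-S^2)*(p+R*S)*p - s*S*C*(a^2*S*C + R*C*p) = (2*a^2*S^2+s)*(p+R*S)^2 - 2*R*S*p*(p+R*S)^2 + s*S^2*p*(p+R*S)"
  using assms by algebra

lemma H_deriv:
  fixes a s R :: real
  assumes s: "s > 0" and R: "R = sqrt (a\<^sup>2 + s)" and that: "t \<in> {0..pi/2}"
  defines "r \<equiv> \<lambda>t. sqrt (a\<^sup>2 * (sin t)\<^sup>2 + s)"
  shows "((\<lambda>t. s * sin t * cos t / (r t + R * sin t)) has_real_derivative
     ((2 * a\<^sup>2 * (sin t)\<^sup>2 + s) / r t - 2 * R * sin t + s * (sin t)\<^sup>2 / (r t + R * sin t))) (at t)"
proof -
  have S: "sin t \<ge> 0" "cos t \<ge> 0" using that by (auto intro: sin_ge_zero cos_ge_zero)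
  have pos: "a\<^sup>2 * (sin t)\<^sup>2 + s > 0" using s by (simp add: add_nonneg_pos)
  have rpos: "r t > 0" using pos unfolding r_def by simp
  have R0: "R \<ge> 0" using s unfolding R by simp
  have Dpos: "r t + R * sin t > 0" using rpos R0 S by (simp add: add_pos_nonneg)
  have rsq: "(r t)\<^sup>2 = a\<^sup>2 * (sin t)\<^sup>2 + s" unfolding r_def using pos by simp
  have Rsq: "R\<^sup>2 = a\<^sup>2 + s" using s unfolding R by simp
  have sc: "(sin t)\<^sup>2 + (cos t)\<^sup>2 = 1" by simp
  have d: "((\<lambda>t. s * sin t * cos t / (r t + R * sin t)) has_real_derivative
     ((s * cos t * cos t + s * sin t * (- sin t)) * (r t + R * sin t)
       - s * sin t * cos t * (a\<^sup>2 * (2 * sin t * cos t) / (2 * r t) + R * cos t)) / (r t + R * sin t)\<^sup>2) (at t)"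
    unfolding r_def using pos Dpos[unfolded r_def]
    by (auto intro!: derivative_eq_intros simp: power2_eq_square field_simps)
  show ?thesis
  proof (rule DERIV_cong[OF d])
    show "((s * cos t * cos t + s * sin t * (- sin t)) * (r t + R * sin t)
       - s * sin t * cos t * (a\<^sup>2 * (2 * sin t * cos t) / (2 * r t) + R * cos t)) / (r t + R * sin t)\<^sup>2
      = (2 * a\<^sup>2 * (sin t)\<^sup>2 + s) / r t - 2 * R * sin t + s * (sin t)\<^sup>2 / (r t + R * sin t)"
    proof -
      define p where "p = r t"
      define D where "D = r t + R * sin t"
      have e: "s*((cos t)^2-(sin t)^2)*(p+R* sin t)*p - s* sin t*cos t*(a^2* sin t*cos t + R*cos t*p)
          = (2*a^2*(sin t)^2+s)*(p+R* sin t)^2 - 2*R* sin t*p*(p+R* sin t)^2 + s*(sin t)^2*p*(p+R* sin t)"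
        by (rule alg) (use rsq Rsq in \<open>auto simp: p_def\<close>)
      have pp: "p > 0" "D > 0" using rpos Dpos by (auto simp: p_def D_def)
      have "((s * cos t * cos t + s * sin t * (- sin t)) * D
           - s * sin t * cos t * (a\<^sup>2 * (2 * sin t * cos t) / (2 * p) + R * cos t)) / D\<^sup>2
          = (s*((cos t)^2-(sin t)^2)*D*p - s* sin t*cos t*(a^2* sin t*cos t + R*cos t*p)) / (p * D^2)"
        using pp by (simp add: field_simps power2_eq_square)
      also have "\<dots> = ((2*a^2*(sin t)^2+s)*D^2 - 2*R* sin t*p*D^2 + s*(sin t)^2*p*D) / (p*D^2)"
        using e by (simp add: D_def p_def)
      also have "\<dots> = (2 * a\<^sup>2 * (sin t)\<^sup>2 + s) / p - 2 * R * sin t + s * (sin t)\<^sup>2 / D"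
        using pp by (simp add: field_simps power2_eq_square)
      finally show ?thesis by (simp add: p_def D_def)
    qed
  qed
qed

definition Wf :: "real \<Rightarrow> real \<Rightarrow> real" where
  "Wf a s = integral {0..pi/2} (\<lambda>t. (sin t)\<^sup>2 / (sqrt (a\<^sup>2 * (sin t)\<^sup>2 + s) + sqrt (a\<^sup>2 + s) * sin t))"

definition I1f :: "real \<Rightarrow> real \<Rightarrow> real" where
  "I1f a s = integral {0..pi/2} (\<lambda>t. a * (sin t)\<^sup>2 / sqrt (a\<^sup>2 * (sin t)\<^sup>2 + s))"

definition I2f :: "real \<Rightarrow> real \<Rightarrow> real" where
  "I2f a s = integral {0..pi/2} (\<lambda>t. (2 * a\<^sup>2 * (sin t)\<^sup>2 + s) / sqrt (a\<^sup>2 * (sin t)\<^sup>2 + s))"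

lemma sincos_nonneg: "t \<in> {0..pi/2} \<Longrightarrow> sin t \<ge> 0 \<and> cos t \<ge> 0"
  by (auto intro: sin_ge_zero cos_ge_zero)

lemma W_integrable:
  assumes "a \<ge> 0" "s > 0"
  shows "(\<lambda>t. (sin t)\<^sup>2 / (sqrt (a\<^sup>2 * (sin t)\<^sup>2 + s) + sqrt (a\<^sup>2 + s) * sin t)) integrable_on {0..pi/2}"
proof (rule integrable_continuous_interval)
  have "sqrt (a\<^sup>2 * (sin t)\<^sup>2 + s) + sqrt (a\<^sup>2 + s) * sin t > 0" if "t \<in> {0..pi/2}" for t
  proof -
    have "sqrt (a\<^sup>2 * (sin t)\<^sup>2 + s) > 0" using assms by (simp add: add_nonneg_pos)
    moreover have "sqrt (a\<^sup>2 + s) * sin t \<ge> 0" using sincos_nonneg[OF that] assms by (intro mult_nonneg_nonneg) auto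
    ultimately show ?thesis by (metis add_pos_nonneg real_sqrt_gt_zero)
  qed
  then show "continuous_on {0..pi/2} (\<lambda>t. (sin t)\<^sup>2 / (sqrt (a\<^sup>2 * (sin t)\<^sup>2 + s) + sqrt (a\<^sup>2 + s) * sin t))"
    by (intro continuous_intros) (auto simp del: divide_const_simps, fastforce)
qed

lemma I2_pos:
  assumes a: "a \<ge> 0" and s: "s > 0"
  shows "I2f a s = 2 * sqrt (a\<^sup>2 + s) - s * Wf a s"
proof -
  define R where "R = sqrt (a\<^sup>2 + s)"
  define H where "H = (\<lambda>t. s * sin t * cos t / (sqrt (a\<^sup>2 * (sin t)\<^sup>2 + s) + R * sin t))"
  define g where "g = (\<lambda>t. (sin t)\<^sup>2 / (sqrt (a\<^sup>2 * (sin t)\<^sup>2 + s) + R * sin t))"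
  define f where "f = (\<lambda>t. (2 * a\<^sup>2 * (sin t)\<^sup>2 + s) / sqrt (a\<^sup>2 * (sin t)\<^sup>2 + s))"
  have "((\<lambda>t. f t + s * g t) has_integral ((- 2 * R * cos (pi/2) + H (pi/2)) - (- 2 * R * cos 0 + H 0))) {0..pi/2}"
  proof (rule ftc)
    fix t assume t: "t \<in> {0..pi/2}"
    have "((\<lambda>t. - 2 * R * cos t + H t) has_real_derivative
      (2 * R * sin t + ((2 * a\<^sup>2 * (sin t)\<^sup>2 + s) / sqrt (a\<^sup>2 * (sin t)\<^sup>2 + s) - 2 * R * sin t
        + s * (sin t)\<^sup>2 / (sqrt (a\<^sup>2 * (sin t)\<^sup>2 + s) + R * sin t)))) (at t)"
    proof -
      have dH: "(H has_real_derivative ((2 * a\<^sup>2 * (sin t)\<^sup>2 + s) / sqrt (a\<^sup>2 * (sin t)\<^sup>2 + s) - 2 * R * sin t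
        + s * (sin t)\<^sup>2 / (sqrt (a\<^sup>2 * (sin t)\<^sup>2 + s) + R * sin t))) (at t)"
        unfolding H_def by (rule H_deriv[OF s R_def t])
      have d1: "((\<lambda>t. - 2 * R * cos t) has_real_derivative 2 * R * sin t) (at t)"
        by (auto intro!: derivative_eq_intros)
      show ?thesis using DERIV_add[OF d1 dH] by simp
    qed
    then show "((\<lambda>t. - 2 * R * cos t + H t) has_real_derivative f t + s * g t) (at t)"
      by (simp add: f_def g_def)
  qed simp
  moreover have "H (pi/2) = 0" "H 0 = 0" by (auto simp: H_def)
  ultimately have h1: "((\<lambda>t. f t + s * g t) has_integral 2 * R) {0..pi/2}" by simp
  have h2: "((\<lambda>t. s * g t) has_integral s * Wf a s) {0..pi/2}"
    unfolding Wf_def g_def R_def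
    by (intro has_integral_mult_right integrable_integral W_integrable a s)
  have "((\<lambda>t. (f t + s * g t) - s * g t) has_integral 2 * R - s * Wf a s) {0..pi/2}"
    by (rule has_integral_diff[OF h1 h2])
  then have "(f has_integral 2 * R - s * Wf a s) {0..pi/2}" by simp
  then show ?thesis unfolding I2f_def f_def R_def by (rule integral_unique)
qed


lemma sqrt_sq_mult: "a \<ge> 0 \<Longrightarrow> b \<ge> 0 \<Longrightarrow> sqrt (a\<^sup>2 * b\<^sup>2) = a * b"
  by (simp add: real_sqrt_mult)

lemma I2_zero:
  assumes a: "a \<ge> 0"
  shows "I2f a 0 = 2 * a"
proof -
  have h: "((\<lambda>t. 2 * a * sin t) has_integral 2 * a * 1) {0..pi/2}"
    by (intro has_integral_mult_right int_sin)
  have "((\<lambda>t. (2 * a\<^sup>2 * (sin t)\<^sup>2 + 0) / sqrt (a\<^sup>2 * (sin t)\<^sup>2 + 0)) has_integral 2 * a) {0..pi/2}"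
  proof (subst has_integral_cong)
    fix t assume t: "t \<in> {0..pi/2}"
    have S: "sin t \<ge> 0" using sincos_nonneg[OF t] by simp
    show "(2 * a\<^sup>2 * (sin t)\<^sup>2 + 0) / sqrt (a\<^sup>2 * (sin t)\<^sup>2 + 0) = 2 * a * sin t"
      using sqrt_sq_mult[OF a S] by (cases "a * sin t = 0") (auto simp: field_simps power2_eq_square)
  next
    show "((\<lambda>t. 2 * a * sin t) has_integral 2 * a) {0..pi/2}" using h by simp
  qed
  then show ?thesis unfolding I2f_def by (rule integral_unique)
qed

lemma I1_zero:
  assumes a: "a > 0"
  shows "I1f a 0 = 1"
proof -
  have "((\<lambda>t. a * (sin t)\<^sup>2 / sqrt (a\<^sup>2 * (sin t)\<^sup>2 + 0)) has_integral 1) {0..pi/2}"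
  proof (subst has_integral_cong)
    fix t assume t: "t \<in> {0..pi/2}"
    have S: "sin t \<ge> 0" using sincos_nonneg[OF t] by simp
    show "a * (sin t)\<^sup>2 / sqrt (a\<^sup>2 * (sin t)\<^sup>2 + 0) = sin t"
      using sqrt_sq_mult[OF _ S, of a] a by (cases "sin t = 0") (auto simp: field_simps power2_eq_square)
  next
    show "((\<lambda>t. sin t) has_integral 1) {0..pi/2}" by (rule int_sin)
  qed
  then show ?thesis unfolding I1f_def by (rule integral_unique)
qed

lemma I1_a0: "I1f 0 s = 0"
  by (simp add: I1f_def)

lemma int_const: "((\<lambda>t. c) has_integral pi/2 * c) {0..pi/2::real}"
  using has_integral_const_real[of c 0 "pi/2"] by simp

lemma low_alg:
  fixes R S e D :: real
  assumes "R > 0" "S \<ge> 0" "e \<ge> 0" "D > 0" "D \<le> 2 * R * S + e"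
  shows "S\<^sup>2 / D \<ge> S / (2 * R) - e / (4 * R\<^sup>2)"
proof (cases "2 * R * S + e = 0")
  case True
  then have "S = 0" "e = 0" using assms by (auto simp: add_nonneg_eq_0_iff)
  then show ?thesis by simp
next
  case False
  then have P: "2 * R * S + e > 0" using assms by (simp add: add_nonneg_nonneg order_le_neq_trans)
  have "S\<^sup>2 / D \<ge> S\<^sup>2 / (2 * R * S + e)"
    using assms P by (intro divide_left_mono) auto
  moreover have "S\<^sup>2 / (2 * R * S + e) - (S / (2 * R) - e / (4 * R\<^sup>2)) = e\<^sup>2 / (4 * R\<^sup>2 * (2 * R * S + e))"
    using P assms by (simp add: field_simps power2_eq_square)
  moreover have "e\<^sup>2 / (4 * R\<^sup>2 * (2 * R * S + e)) \<ge> 0" using P by simp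
  ultimately show ?thesis by linarith
qed

lemma W_bounds:
  assumes a: "a \<ge> 0" and s: "s > 0"
  defines "R \<equiv> sqrt (a\<^sup>2 + s)"
  shows "0 \<le> Wf a s" "Wf a s \<le> 1 / (2 * R)" "Wf a s \<ge> 1 / (2 * R) - pi * sqrt s / (8 * R\<^sup>2)"
proof -
  have Rpos: "R > 0" unfolding R_def using s by (simp add: add_nonneg_pos)
  let ?g = "\<lambda>t. (sin t)\<^sup>2 / (sqrt (a\<^sup>2 * (sin t)\<^sup>2 + s) + sqrt (a\<^sup>2 + s) * sin t)"
  have gi: "?g integrable_on {0..pi/2}" by (rule W_integrable[OF a s])
  have key: "sqrt (a\<^sup>2 * (sin t)\<^sup>2 + s) \<ge> R * sin t" "sqrt (a\<^sup>2 * (sin t)\<^sup>2 + s) \<le> R * sin t + sqrt s"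
    "sqrt (a\<^sup>2 * (sin t)\<^sup>2 + s) > 0" "sin t \<ge> 0"
    if t: "t \<in> {0..pi/2}" for t
  proof -
    have S: "sin t \<ge> 0" using sincos_nonneg[OF t] by simp
    have S1: "(sin t)\<^sup>2 \<le> 1" by (simp add: abs_square_le_1)
    have "(R * sin t)\<^sup>2 = (a\<^sup>2 + s) * (sin t)\<^sup>2" unfolding R_def using s by (simp add: power_mult_distrib)
    also have "\<dots> \<le> a\<^sup>2 * (sin t)\<^sup>2 + s" using S1 s by (simp add: algebra_simps mult_left_le)
    finally show "sqrt (a\<^sup>2 * (sin t)\<^sup>2 + s) \<ge> R * sin t"
      using Rpos S by (simp add: real_le_rsqrt)
    have "sqrt (a\<^sup>2 * (sin t)\<^sup>2 + s) \<le> sqrt (a\<^sup>2 * (sin t)\<^sup>2) + sqrt s"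
      by (rule sqrt_add_le_add_sqrt) (use s in auto)
    also have "sqrt (a\<^sup>2 * (sin t)\<^sup>2) = a * sin t" by (rule sqrt_sq_mult[OF a S])
    also have "a * sin t \<le> R * sin t"
      using S by (intro mult_right_mono) (auto simp: R_def real_le_rsqrt s less_imp_le)
    finally show "sqrt (a\<^sup>2 * (sin t)\<^sup>2 + s) \<le> R * sin t + sqrt s" by simp
    show "sqrt (a\<^sup>2 * (sin t)\<^sup>2 + s) > 0" using s by (simp add: add_nonneg_pos)
    show "sin t \<ge> 0" by (rule S)
  qed
  show "0 \<le> Wf a s" unfolding Wf_def
  proof (rule integral_nonneg[OF gi])
    fix t assume t: "t \<in> {0..pi/2}"
    note k = key[OF t]
    have "R * sin t \<ge> 0" using k Rpos by simp
    then have "sqrt (a\<^sup>2 * (sin t)\<^sup>2 + s) + R * sin t > 0" using k by linarith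
    then show "0 \<le> ?g t" unfolding R_def[symmetric] by simp
  qed
  have h1: "((\<lambda>t. sin t / (2 * R)) has_integral 1 / (2 * R)) {0..pi/2}"
    using has_integral_mult_right[OF int_sin, of "1/(2*R)"] by simp
  have "Wf a s \<le> 1 / (2 * R)" unfolding Wf_def
  proof (rule has_integral_le[OF integrable_integral[OF gi] h1])
    fix t assume t: "t \<in> {0..pi/2}"
    note k = key[OF t]
    show "?g t \<le> sin t / (2 * R)"
    proof (cases "sin t = 0")
      case False
      then have Sp: "sin t > 0" using k by simp
      have D: "sqrt (a\<^sup>2 * (sin t)\<^sup>2 + s) + R * sin t \<ge> 2 * R * sin t" using k by linarith
      have p: "2 * R * sin t > 0" using Sp Rpos by simp
      have "?g t \<le> (sin t)\<^sup>2 / (2 * R * sin t)"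
        unfolding R_def[symmetric] by (rule divide_left_mono[OF D]) (use D p in \<open>auto intro!: mult_pos_pos\<close>)
      also have "\<dots> = sin t / (2 * R)" using Sp by (simp add: power2_eq_square)
      finally show ?thesis .
    qed simp
  qed
  then show "Wf a s \<le> 1 / (2 * R)" .
  have h2: "((\<lambda>t. sin t / (2 * R) - sqrt s / (4 * R\<^sup>2)) has_integral 1 / (2 * R) - pi/2 * (sqrt s / (4 * R\<^sup>2))) {0..pi/2}"
    by (rule has_integral_diff[OF h1 int_const])
  have "1 / (2 * R) - pi/2 * (sqrt s / (4 * R\<^sup>2)) \<le> Wf a s" unfolding Wf_def
  proof (rule has_integral_le[OF h2 integrable_integral[OF gi]])
    fix t assume t: "t \<in> {0..pi/2}"
    note k = key[OF t]
    show "sin t / (2 * R) - sqrt s / (4 * R\<^sup>2) \<le> ?g t"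
      unfolding R_def[symmetric]
      by (rule low_alg) (use k Rpos s in \<open>auto intro: add_pos_nonneg\<close>)
  qed
  then show "Wf a s \<ge> 1 / (2 * R) - pi * sqrt s / (8 * R\<^sup>2)" by simp
qed


lemma int_log:
  assumes a: "a > 0" and s: "s > 0"
  shows "((\<lambda>t. sin t * cos t / (a\<^sup>2 * (sin t)\<^sup>2 + s)) has_integral (ln (a\<^sup>2 + s) - ln s) / (2 * a\<^sup>2)) {0..pi/2}"
proof -
  have "((\<lambda>t. sin t * cos t / (a\<^sup>2 * (sin t)\<^sup>2 + s)) has_integral
      ln (a\<^sup>2 * (sin (pi/2))\<^sup>2 + s) / (2 * a\<^sup>2) - ln (a\<^sup>2 * (sin 0)\<^sup>2 + s) / (2 * a\<^sup>2)) {0..pi/2}"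
  proof (rule ftc)
    fix t assume t: "t \<in> {0..pi/2}"
    have Q: "a\<^sup>2 * (sin t)\<^sup>2 + s > 0" using s by (simp add: add_nonneg_pos)
    show "((\<lambda>t. ln (a\<^sup>2 * (sin t)\<^sup>2 + s) / (2 * a\<^sup>2)) has_real_derivative
        sin t * cos t / (a\<^sup>2 * (sin t)\<^sup>2 + s)) (at t)"
    proof -
      have dQ: "((\<lambda>t. a\<^sup>2 * (sin t)\<^sup>2 + s) has_real_derivative a\<^sup>2 * (2 * sin t * cos t)) (at t)"
        by (auto intro!: derivative_eq_intros simp: power2_eq_square)
      have dL: "((\<lambda>t. ln (a\<^sup>2 * (sin t)\<^sup>2 + s) / (2 * a\<^sup>2)) has_real_derivative
          (1 / (a\<^sup>2 * (sin t)\<^sup>2 + s) * (a\<^sup>2 * (2 * sin t * cos t))) / (2 * a\<^sup>2)) (at t)"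
        by (rule DERIV_cdivide[OF DERIV_chain'[OF dQ DERIV_ln_divide[OF Q]]])
      have gen: "\<And>q::real. q \<noteq> 0 \<Longrightarrow> (1 / q * (a\<^sup>2 * (2 * sin t * cos t))) / (2 * a\<^sup>2) = sin t * cos t / q"
        using a by (simp add: field_simps)
      have "(1 / (a\<^sup>2 * (sin t)\<^sup>2 + s) * (a\<^sup>2 * (2 * sin t * cos t))) / (2 * a\<^sup>2)
        = sin t * cos t / (a\<^sup>2 * (sin t)\<^sup>2 + s)"
        by (rule gen) (use Q in simp)
      with dL show ?thesis by simp
    qed
  qed simp
  then show ?thesis by (simp add: diff_divide_distrib)
qed

lemma I1_integrable:
  assumes a: "a \<ge> 0" and s: "s > 0"
  shows "(\<lambda>t. a * (sin t)\<^sup>2 / sqrt (a\<^sup>2 * (sin t)\<^sup>2 + s)) integrable_on {0..pi/2}"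
proof (rule integrable_continuous_interval)
  have nz: "sqrt (a\<^sup>2 * (sin t)\<^sup>2 + s) \<noteq> 0" for t
  proof -
    have "a\<^sup>2 * (sin t)\<^sup>2 + s > 0" using s by (intro add_nonneg_pos) auto
    then show ?thesis by simp
  qed
  then show "continuous_on {0..pi/2} (\<lambda>t. a * (sin t)\<^sup>2 / sqrt (a\<^sup>2 * (sin t)\<^sup>2 + s))"
    by (intro continuous_intros) blast
qed

lemma I1_bounds:
  assumes a: "a > 0" and s: "s > 0"
  defines "R \<equiv> sqrt (a\<^sup>2 + s)"
  shows "0 \<le> I1f a s" "I1f a s \<le> 1 - s / (2 * R\<^sup>2)"
    "1 - I1f a s \<le> s * ((ln (a\<^sup>2 + s) - ln s) / (2 * a\<^sup>2) + 1 / a\<^sup>2)"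
proof -
  let ?f = "\<lambda>t. a * (sin t)\<^sup>2 / sqrt (a\<^sup>2 * (sin t)\<^sup>2 + s)"
  have fi: "?f integrable_on {0..pi/2}" by (rule I1_integrable) (use a s in auto)
  have Rpos: "R > 0" unfolding R_def using s by (simp add: add_nonneg_pos)
  have key: "sin t - ?f t = s * sin t / (sqrt (a\<^sup>2 * (sin t)\<^sup>2 + s) * (sqrt (a\<^sup>2 * (sin t)\<^sup>2 + s) + a * sin t))"
    "sqrt (a\<^sup>2 * (sin t)\<^sup>2 + s) > 0" "sin t \<ge> 0" "cos t \<ge> 0" "cos t \<le> 1"
    "sqrt (a\<^sup>2 * (sin t)\<^sup>2 + s) \<le> R" "a * sin t \<le> R"
    "(sqrt (a\<^sup>2 * (sin t)\<^sup>2 + s))\<^sup>2 = a\<^sup>2 * (sin t)\<^sup>2 + s"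
    if t: "t \<in> {0..pi/2}" for t
  proof -
    define r where "r = sqrt (a\<^sup>2 * (sin t)\<^sup>2 + s)"
    have S: "sin t \<ge> 0" "cos t \<ge> 0" using sincos_nonneg[OF t] by auto
    have rp: "r > 0" unfolding r_def using s by (simp add: add_nonneg_pos)
    have rsq: "r\<^sup>2 = a\<^sup>2 * (sin t)\<^sup>2 + s" unfolding r_def using s by (simp add: add_nonneg_nonneg)
    have D: "r + a * sin t > 0" using rp S a by (simp add: add_pos_nonneg)
    have e1: "sin t - a * (sin t)\<^sup>2 / r = sin t * (r - a * sin t) / r"
      using rp by (simp add: field_simps power2_eq_square)
    have e2: "r - a * sin t = (r\<^sup>2 - a\<^sup>2 * (sin t)\<^sup>2) / (r + a * sin t)"
      using D by (simp add: field_simps power2_eq_square)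
    have "sin t - a * (sin t)\<^sup>2 / r = sin t * (r\<^sup>2 - a\<^sup>2 * (sin t)\<^sup>2) / (r * (r + a * sin t))"
      unfolding e1 e2 using rp D by simp
    also have "\<dots> = s * sin t / (r * (r + a * sin t))" using rsq by simp
    finally show "sin t - ?f t = s * sin t / (sqrt (a\<^sup>2 * (sin t)\<^sup>2 + s) * (sqrt (a\<^sup>2 * (sin t)\<^sup>2 + s) + a * sin t))"
      by (simp add: r_def)
    show "sqrt (a\<^sup>2 * (sin t)\<^sup>2 + s) > 0" using rp by (simp add: r_def)
    show "sin t \<ge> 0" "cos t \<ge> 0" "cos t \<le> 1" using S by auto
    have S1: "(sin t)\<^sup>2 \<le> 1" by (simp add: abs_square_le_1)
    have "a\<^sup>2 * (sin t)\<^sup>2 + s \<le> a\<^sup>2 + s" using S1 by (simp add: mult_left_le)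
    then show "sqrt (a\<^sup>2 * (sin t)\<^sup>2 + s) \<le> R" unfolding R_def by simp
    have "(a * sin t)\<^sup>2 \<le> a\<^sup>2 + s" using S1 s by (simp add: power_mult_distrib mult_left_le add_increasing2)
    then show "a * sin t \<le> R" unfolding R_def by (simp add: real_le_rsqrt)
    show "(sqrt (a\<^sup>2 * (sin t)\<^sup>2 + s))\<^sup>2 = a\<^sup>2 * (sin t)\<^sup>2 + s" using rsq by (simp add: r_def)
  qed
  show "0 \<le> I1f a s" unfolding I1f_def
    by (rule integral_nonneg[OF fi]) (use key(2) a in \<open>auto intro!: divide_nonneg_pos\<close>)
  have h1: "((\<lambda>t. sin t - s / (2 * R\<^sup>2) * sin t) has_integral 1 - s / (2 * R\<^sup>2) * 1) {0..pi/2}"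
    by (intro has_integral_diff int_sin has_integral_mult_right)
  have "I1f a s \<le> 1 - s / (2 * R\<^sup>2) * 1" unfolding I1f_def
  proof (rule has_integral_le[OF integrable_integral[OF fi] h1])
    fix t assume t: "t \<in> {0..pi/2}"
    note k = key[OF t]
    define r where "r = sqrt (a\<^sup>2 * (sin t)\<^sup>2 + s)"
    have rp: "r > 0" "r \<le> R" "a * sin t \<le> R" using k by (auto simp: r_def)
    have D: "r * (r + a * sin t) \<le> 2 * R\<^sup>2"
    proof -
      have "r * (r + a * sin t) \<le> R * (R + R)"
        using rp k a by (intro mult_mono add_mono) auto
      then show ?thesis by (simp add: power2_eq_square)
    qed
    have Dp: "r * (r + a * sin t) > 0" using rp k a by (simp add: add_pos_nonneg)
    have "s * sin t / (2 * R\<^sup>2) \<le> s * sin t / (r * (r + a * sin t))"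
      by (rule divide_left_mono[OF D]) (use Dp s k(3) Rpos in \<open>auto intro!: mult_pos_pos\<close>)
    then show "?f t \<le> sin t - s / (2 * R\<^sup>2) * sin t" using k(1) by (simp add: r_def)
  qed
  then show "I1f a s \<le> 1 - s / (2 * R\<^sup>2)" by simp
  define L where "L = (ln (a\<^sup>2 + s) - ln s) / (2 * a\<^sup>2)"
  have h2: "((\<lambda>t. sin t - s * (sin t * cos t / (a\<^sup>2 * (sin t)\<^sup>2 + s) + sin t / a\<^sup>2)) has_integral 1 - s * (L + 1 / a\<^sup>2)) {0..pi/2}"
  proof -
    have "((\<lambda>t. sin t / a\<^sup>2) has_integral 1 / a\<^sup>2) {0..pi/2}"
      using has_integral_mult_right[OF int_sin, of "1/a\<^sup>2"] by simp
    then show ?thesis unfolding L_def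
      by (intro has_integral_diff int_sin has_integral_mult_right has_integral_add int_log a s)
  qed
  have "1 - s * (L + 1 / a\<^sup>2) \<le> I1f a s" unfolding I1f_def
  proof (rule has_integral_le[OF h2 integrable_integral[OF fi]])
    fix t assume t: "t \<in> {0..pi/2}"
    note k = key[OF t]
    define r where "r = sqrt (a\<^sup>2 * (sin t)\<^sup>2 + s)"
    define Q where "Q = a\<^sup>2 * (sin t)\<^sup>2 + s"
    have rp: "r > 0" and rsq: "r\<^sup>2 = Q" using k by (auto simp: r_def Q_def)
    have Qp: "Q > 0" using rp rsq by auto
    have D: "r * r \<le> r * (r + a * sin t)" using rp k a by (intro mult_left_mono) auto
    have "s * sin t / (r * (r + a * sin t)) \<le> s * sin t / (r * r)"
      by (rule divide_left_mono[OF D]) (use rp s k(3) D in \<open>auto intro!: mult_pos_pos\<close>)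
    also have "\<dots> = s * (sin t / Q)" using rsq by (simp add: power2_eq_square)
    also have "sin t / Q \<le> sin t * cos t / Q + sin t / a\<^sup>2"
    proof -
      have c: "1 - cos t \<le> (sin t)\<^sup>2"
      proof -
        have "cos t * cos t \<le> cos t * 1" using k by (intro mult_left_mono) auto
        then show ?thesis using sin_squared_eq[of t] by (simp add: power2_eq_square)
      qed
      have "a\<^sup>2 * sin t * (1 - cos t) \<le> a\<^sup>2 * sin t * (sin t)\<^sup>2"
        using k c by (intro mult_left_mono) auto
      also have "\<dots> \<le> sin t * Q" using k s by (simp add: Q_def algebra_simps)
      finally have "a\<^sup>2 * sin t * (1 - cos t) \<le> sin t * Q" .
      then show ?thesis using Qp a by (simp add: field_simps)
    qed
    finally have "s * sin t / (r * (r + a * sin t)) \<le> s * (sin t * cos t / Q + sin t / a\<^sup>2)"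
      using s by (simp add: mult_left_mono)
    then show "sin t - s * (sin t * cos t / (a\<^sup>2 * (sin t)\<^sup>2 + s) + sin t / a\<^sup>2) \<le> ?f t"
      using k(1) by (simp add: r_def Q_def)
  qed
  then show "1 - I1f a s \<le> s * ((ln (a\<^sup>2 + s) - ln s) / (2 * a\<^sup>2) + 1 / a\<^sup>2)"
    by (simp add: L_def)
qed


lemma psi1_eq: "psi1 \<alpha> s = cis (Arg \<alpha>) * complex_of_real (I1f (cmod \<alpha>) s)"
  by (simp add: psi1_def I1f_def)

lemma psi2_eq: "psi2 \<alpha> s \<delta> w = 4 / \<delta> * ((cmod \<alpha>)\<^sup>2 + s + 1 - I2f (cmod \<alpha>) s) + 4 * w"
  by (simp add: psi2_def I2f_def)

lemma psi2_pos:
  assumes s: "s > 0"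
  shows "psi2 \<alpha> s \<delta> 0 = 4 / \<delta> * ((sqrt ((cmod \<alpha>)\<^sup>2 + s) - 1)\<^sup>2 + s * Wf (cmod \<alpha>) s)"
proof -
  have R: "(sqrt ((cmod \<alpha>)\<^sup>2 + s))\<^sup>2 = (cmod \<alpha>)\<^sup>2 + s" using s by (simp add: add_nonneg_nonneg)
  show ?thesis unfolding psi2_eq I2_pos[OF norm_ge_zero s]
    using R by (simp add: power2_diff algebra_simps)
qed

lemma psi2_zero: "psi2 \<alpha> 0 \<delta> 0 = 4 / \<delta> * (cmod \<alpha> - 1)\<^sup>2"
  unfolding psi2_eq I2_zero[OF norm_ge_zero] by (simp add: power2_diff algebra_simps)

lemma psi2_nonneg:
  assumes "\<delta> > 0" "s \<ge> 0"
  shows "psi2 \<alpha> s \<delta> 0 \<ge> 0"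
proof (cases "s = 0")
  case True
  then show ?thesis using assms by (simp add: psi2_zero)
next
  case False
  then have s: "s > 0" using assms by simp
  have "Wf (cmod \<alpha>) s \<ge> 0" by (rule W_bounds(1)[OF norm_ge_zero s])
  then show ?thesis unfolding psi2_pos[OF s] using assms s by simp
qed

lemma psi1_real:
  assumes "a > 0"
  shows "psi1 (complex_of_real a) s = complex_of_real (I1f a s)"
  using assms by (simp add: psi1_eq)

lemma s_step:
  assumes a: "1/2 \<le> a" "a \<le> 1" and s: "s \<ge> 0" and d: "\<delta> > 0"
  shows "psi2 (complex_of_real a) s \<delta> 0 \<le> 4 / \<delta> * ((1 - a)\<^sup>2 + s\<^sup>2) + 2 / \<delta> * (1 + 2 * (1 - a)) * s"
proof (cases "s = 0")
  case True
  then show ?thesis using a d by (simp add: psi2_zero power2_commute)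
next
  case False
  then have sp: "s > 0" using s by simp
  define R where "R = sqrt (a\<^sup>2 + s)"
  have cm: "cmod (complex_of_real a) = a" using a by simp
  have Ra: "R \<ge> a" unfolding R_def using s a by (simp add: real_le_rsqrt)
  have R1: "R \<le> 1 + s"
  proof -
    have a2: "a\<^sup>2 \<le> 1" using a by (intro power_le_one) auto
    have e: "(1 + s)\<^sup>2 = 1 + s + s + s\<^sup>2" by (simp add: power2_eq_square algebra_simps)
    have "a\<^sup>2 + s \<le> (1 + s)\<^sup>2" using e a2 s zero_le_power2[of s] by linarith
    then show ?thesis unfolding R_def using s by (simp add: real_sqrt_le_iff real_le_lsqrt)
  qed
  have Rsq: "(R - 1)\<^sup>2 \<le> (1 - a)\<^sup>2 + s\<^sup>2"
  proof (cases "R \<ge> 1")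
    case True
    then have "(R - 1)\<^sup>2 \<le> s\<^sup>2" using R1 by (intro power_mono) auto
    then show ?thesis using zero_le_power2[of "1 - a"] by linarith
  next
    case False
    then have "(R - 1)\<^sup>2 = (1 - R)\<^sup>2" by (simp add: power2_commute)
    also have "\<dots> \<le> (1 - a)\<^sup>2" using False Ra by (intro power_mono) auto
    finally show ?thesis using zero_le_power2[of s] by linarith
  qed
  have W: "Wf a s \<le> 1 / (2 * R)" using W_bounds(2)[OF _ sp, of a] a unfolding R_def by simp
  have "1 / (2 * R) \<le> 1 / (2 * a)" using Ra a by (intro divide_left_mono) auto
  also have "\<dots> \<le> (1 + 2 * (1 - a)) / 2"
  proof -
    have "(2 * a - 1) * (1 - a) \<ge> 0" using a by (intro mult_nonneg_nonneg) auto
    then have "1 \<le> a * (1 + 2 * (1 - a))" by (simp add: algebra_simps)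
    then show ?thesis using a by (simp add: field_simps)
  qed
  finally have "s * Wf a s \<le> s * ((1 + 2 * (1 - a)) / 2)" using W sp by (intro mult_left_mono) auto
  then have "(R - 1)\<^sup>2 + s * Wf a s \<le> (1 - a)\<^sup>2 + s\<^sup>2 + s * ((1 + 2 * (1 - a)) / 2)" using Rsq by linarith
  then have "4 / \<delta> * ((R - 1)\<^sup>2 + s * Wf a s) \<le> 4 / \<delta> * ((1 - a)\<^sup>2 + s\<^sup>2 + s * ((1 + 2 * (1 - a)) / 2))"
    using d by (intro mult_left_mono) auto
  moreover have "4 / \<delta> * ((1 - a)\<^sup>2 + s\<^sup>2 + s * ((1 + 2 * (1 - a)) / 2))
      = 4 / \<delta> * ((1 - a)\<^sup>2 + s\<^sup>2) + 2 / \<delta> * (1 + 2 * (1 - a)) * s"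
    using d by (simp add: field_simps)
  ultimately show ?thesis unfolding psi2_pos[OF sp] cm R_def[symmetric]
    by linarith
qed

lemma ln_sq_bound:
  assumes z: "z > 0"
  shows "(ln (1 + z))\<^sup>2 \<le> 16 * sqrt z"
proof -
  define v where "v = sqrt (sqrt z)"
  define w where "w = sqrt (sqrt (1 + z))"
  have v0: "v \<ge> 0" unfolding v_def using z by simp
  have p4: "\<And>u::real. u ^ 4 = (u\<^sup>2)\<^sup>2" by (simp add: power4_eq_xxxx power2_eq_square mult.assoc)
  have v4: "v ^ 4 = z" unfolding p4 v_def using z by simp
  have w4: "w ^ 4 = 1 + z" unfolding p4 w_def using z by simp
  have w1: "w \<ge> 1" unfolding w_def using z by simp
  have "w ^ 4 \<le> (1 + v) ^ 4"
  proof -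
    have "(1 + v) ^ 4 = 1 + 4 * v + 6 * v\<^sup>2 + 4 * v ^ 3 + v ^ 4" by (simp add: power2_eq_square power3_eq_cube power4_eq_xxxx algebra_simps)
    then show ?thesis using w4 v4 v0 by simp
  qed
  then have wv: "w \<le> 1 + v" using w1 v0 by (simp add: power_le_imp_le_base[of w 4 "1 + v"])
  have "ln (1 + z) = ln (w ^ 4)" using w4 by simp
  also have "\<dots> = 4 * ln w" using w1 by (simp add: ln_realpow)
  also have "\<dots> \<le> 4 * (w - 1)" using w1 ln_le_minus_one[of w] by simp
  also have "\<dots> \<le> 4 * v" using wv by simp
  finally have l: "ln (1 + z) \<le> 4 * v" .
  have "ln (1 + z) \<ge> 0" using z by simp
  then have "(ln (1 + z))\<^sup>2 \<le> (4 * v)\<^sup>2" using l by (intro power_mono) auto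
  also have "\<dots> = 16 * sqrt z" unfolding v_def using z by (simp add: power_mult_distrib)
  finally show ?thesis .
qed


lemma x_step:
  assumes a: "1/2 \<le> a" "a \<le> 1" and s: "0 \<le> s" "s \<le> 1"
  shows "I1f a s \<le> 1" "(1 - I1f a s)\<^sup>2 \<le> (128 * sqrt s + 32 * s) * s"
proof -
  have ap: "a > 0" using a by simp
  have "I1f a s \<le> 1 \<and> (1 - I1f a s)\<^sup>2 \<le> (128 * sqrt s + 32 * s) * s"
  proof (cases "s = 0")
    case True
    then show ?thesis using I1_zero[OF ap] by simp
  next
    case False
    then have sp: "s > 0" using s by simp
    define J where "J = I1f a s"
    define R where "R = sqrt (a\<^sup>2 + s)"
    have Rp: "R > 0" unfolding R_def using sp by (simp add: add_nonneg_pos)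
    have J1: "J \<le> 1 - s / (2 * R\<^sup>2)" unfolding J_def R_def by (rule I1_bounds(2)[OF ap sp])
    have "s / (2 * R\<^sup>2) \<ge> 0" using sp by simp
    then have J1': "J \<le> 1" using J1 by linarith
    have J2: "1 - J \<le> s * ((ln (a\<^sup>2 + s) - ln s) / (2 * a\<^sup>2) + 1 / a\<^sup>2)"
      unfolding J_def by (rule I1_bounds(3)[OF ap sp])
    define L where "L = ln (1 + 1 / s)"
    have a2: "a\<^sup>2 \<ge> 1/4" "a\<^sup>2 \<le> 1"
    proof -
      have "(1/2)\<^sup>2 \<le> a\<^sup>2" using a by (intro power_mono) auto
      then show "a\<^sup>2 \<ge> 1/4" by (simp add: power2_eq_square)
      show "a\<^sup>2 \<le> 1" using a by (intro power_le_one) auto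
    qed
    have L1: "ln (a\<^sup>2 + s) - ln s = ln ((a\<^sup>2 + s) / s)" using sp a2 by (simp add: ln_div)
    have L1n: "ln ((a\<^sup>2 + s) / s) \<ge> 0" using sp a2 by simp
    have L1L: "ln ((a\<^sup>2 + s) / s) \<le> L"
    proof -
      have "(a\<^sup>2 + s) / s \<le> 1 + 1 / s" using sp a2 by (simp add: field_simps)
      then show ?thesis unfolding L_def using sp a2 by (subst ln_le_cancel_iff) (auto simp: add_pos_nonneg)
    qed
    have g: "y / (2 * a\<^sup>2) \<le> 2 * y" if y: "0 \<le> y" for y :: real
    proof -
      have "y * 1 \<le> y * (4 * a\<^sup>2)" using y a2 by (intro mult_left_mono) auto
      then show "y / (2 * a\<^sup>2) \<le> 2 * y" using ap by (simp add: divide_le_eq algebra_simps)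
    qed
    have "ln ((a\<^sup>2 + s) / s) / (2 * a\<^sup>2) \<le> 2 * ln ((a\<^sup>2 + s) / s)"
      by (rule g[OF L1n])
    moreover have "1 / a\<^sup>2 \<le> 4" using a2 ap by (simp add: divide_le_eq)
    ultimately have "(ln (a\<^sup>2 + s) - ln s) / (2 * a\<^sup>2) + 1 / a\<^sup>2 \<le> 2 * L + 4"
      unfolding L1 using L1L by linarith
    then have J3: "1 - J \<le> s * (2 * L + 4)" using J2 sp by (smt (verit) mult_left_mono)
    have J0: "0 \<le> 1 - J" using J1' by simp
    have Ln: "L \<ge> 0" unfolding L_def using sp by simp
    have "(1 - J)\<^sup>2 \<le> (s * (2 * L + 4))\<^sup>2" using J0 J3 by (intro power_mono) auto
    also have "\<dots> = s\<^sup>2 * (2 * L + 4)\<^sup>2" by (simp add: power_mult_distrib)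
    also have "\<dots> \<le> s\<^sup>2 * (8 * L\<^sup>2 + 32)"
    proof -
      have "(2 * L + 4)\<^sup>2 \<le> 8 * L\<^sup>2 + 32" using zero_le_power2[of "2 * L - 4"]
        by (simp add: power2_eq_square algebra_simps)
      then show ?thesis by (intro mult_left_mono) auto
    qed
    also have "\<dots> \<le> s\<^sup>2 * (8 * (16 * sqrt (1 / s)) + 32)"
    proof -
      have "L\<^sup>2 \<le> 16 * sqrt (1 / s)" unfolding L_def by (rule ln_sq_bound) (use sp in simp)
      then show ?thesis by (intro mult_left_mono) auto
    qed
    also have "\<dots> = (128 * sqrt s + 32 * s) * s"
    proof -
      have "s\<^sup>2 * sqrt (1 / s) = s * sqrt s"
        using sp by (simp add: real_sqrt_divide field_simps power2_eq_square)
      then show ?thesis by (simp add: algebra_simps power2_eq_square)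
    qed
    finally show ?thesis using J1' unfolding J_def by simp
  qed
  then show "I1f a s \<le> 1" "(1 - I1f a s)\<^sup>2 \<le> (128 * sqrt s + 32 * s) * s" by auto
qed


lemma pot_step:
  fixes q c \<rho> \<beta> e xb s x s' x' :: real
  assumes s: "0 \<le> s" "s \<le> e\<^sup>2" and e: "0 \<le> e" and x: "0 \<le> x" "x \<le> xb"
    and pos: "q \<ge> 0" "c \<ge> 0" "\<beta> \<ge> 0"
    and hs: "s' \<le> c * (x\<^sup>2 + s\<^sup>2) + q * (1 + 2 * x) * s"
    and hx: "x'\<^sup>2 \<le> (128 * sqrt s + 32 * s) * s"
    and C: "c * e\<^sup>2 + 2 * q * xb + \<beta> * (128 * e + 32 * e\<^sup>2) \<le> \<rho> - q"
    and rb: "\<rho> * \<beta> = c"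
  shows "s' + \<beta> * x'\<^sup>2 \<le> \<rho> * (s + \<beta> * x\<^sup>2)"
proof -
  have se: "sqrt s \<le> e" using s e by (simp add: real_sqrt_le_iff real_le_lsqrt)
  have f1: "c * s\<^sup>2 \<le> c * e\<^sup>2 * s"
  proof -
    have "s * s \<le> e\<^sup>2 * s" using s by (intro mult_right_mono) auto
    then show ?thesis using pos by (simp add: power2_eq_square mult.assoc mult_left_mono)
  qed
  have f2: "2 * q * x * s \<le> 2 * q * xb * s" using pos x s by (intro mult_right_mono mult_left_mono) auto
  have f3: "\<beta> * ((128 * sqrt s + 32 * s) * s) \<le> \<beta> * (128 * e + 32 * e\<^sup>2) * s"
  proof -
    have "128 * sqrt s + 32 * s \<le> 128 * e + 32 * e\<^sup>2" using se s by linarith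
    then have "(128 * sqrt s + 32 * s) * s \<le> (128 * e + 32 * e\<^sup>2) * s" using s by (intro mult_right_mono) auto
    then show ?thesis using pos by (simp add: mult.assoc mult_left_mono)
  qed
  have f4: "\<beta> * x'\<^sup>2 \<le> \<beta> * ((128 * sqrt s + 32 * s) * s)" using hx pos by (intro mult_left_mono) auto
  have f5: "(c * e\<^sup>2 + 2 * q * xb + \<beta> * (128 * e + 32 * e\<^sup>2)) * s \<le> (\<rho> - q) * s"
    using C s by (intro mult_right_mono) auto
  have "s' + \<beta> * x'\<^sup>2 \<le> c * x\<^sup>2 + c * s\<^sup>2 + q * s + 2 * q * x * s + \<beta> * ((128 * sqrt s + 32 * s) * s)"
    using hs f4 by (simp add: algebra_simps)
  also have "\<dots> \<le> c * x\<^sup>2 + q * s + (c * e\<^sup>2 + 2 * q * xb + \<beta> * (128 * e + 32 * e\<^sup>2)) * s"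
    using f1 f2 f3 by (simp add: algebra_simps)
  also have "\<dots> \<le> c * x\<^sup>2 + q * s + (\<rho> - q) * s" using f5 by simp
  also have "\<dots> = \<rho> * (s + \<beta> * x\<^sup>2)" using rb by (simp add: algebra_simps)
  finally show ?thesis .
qed


lemma partA:
  assumes d: "\<delta> > 2"
  shows "\<exists>\<epsilon>1>0. \<exists>\<epsilon>2>0. \<forall>a0::real. \<forall>s0::real.
          1 - \<epsilon>1 < a0 \<and> a0 < 1 \<and> 0 < s0 \<and> s0 < \<epsilon>2 \<longrightarrow>
            ((\<lambda>t. fst (se \<delta> 0 (complex_of_real a0) s0 t)) \<longlonglongrightarrow> 1)
            \<and> ((\<lambda>t. snd (se \<delta> 0 (complex_of_real a0) s0 t)) \<longlonglongrightarrow> 0)"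
proof -
  define q where "q = 2 / \<delta>"
  define c where "c = 4 / \<delta>"
  define \<eta> where "\<eta> = (1 - q) / 2"
  define \<rho> where "\<rho> = q + \<eta>"
  define \<beta> where "\<beta> = c / \<rho>"
  define xb where "xb = min (1/2) (\<eta> / (6 * q))"
  define e where "e = min 1 (min (\<eta> / (3 * c)) (\<eta> / (480 * \<beta>)))"
  define Pb where "Pb = min (e\<^sup>2) (\<beta> * xb\<^sup>2)"
  define \<epsilon>2 where "\<epsilon>2 = Pb / 2"
  define \<epsilon>1 where "\<epsilon>1 = sqrt (Pb / (2 * \<beta>))"
  have dp: "\<delta> > 0" using d by simp
  have q: "0 < q" "q < 1" unfolding q_def using d by auto
  have cq: "c = 2 * q" unfolding c_def q_def by simp
  have c: "c > 0" using q cq by simp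
  have \<eta>: "\<eta> > 0" unfolding \<eta>_def using q by simp
  have \<rho>: "0 < \<rho>" "\<rho> < 1" unfolding \<rho>_def \<eta>_def using q by (auto simp: field_simps)
  have \<beta>: "\<beta> > 0" unfolding \<beta>_def using c \<rho> by simp
  have rb: "\<rho> * \<beta> = c" unfolding \<beta>_def using \<rho> by simp
  have xb: "0 < xb" "xb \<le> 1/2" "xb \<le> \<eta> / (6 * q)" unfolding xb_def using \<eta> q by auto
  have e: "0 < e" "e \<le> 1" "e \<le> \<eta> / (3 * c)" "e \<le> \<eta> / (480 * \<beta>)"
    unfolding e_def using \<eta> c \<beta> by auto
  have Pb: "0 < Pb" "Pb \<le> e\<^sup>2" "Pb \<le> \<beta> * xb\<^sup>2" unfolding Pb_def using e \<beta> xb by auto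
  have C: "c * e\<^sup>2 + 2 * q * xb + \<beta> * (128 * e + 32 * e\<^sup>2) \<le> \<rho> - q"
  proof -
    have ee: "e\<^sup>2 \<le> e" using e by (simp add: power2_eq_square mult_left_le)
    have "c * e\<^sup>2 \<le> c * e" using ee c by (intro mult_left_mono) auto
    also have "c * e \<le> \<eta> / 3" using e(3) c by (simp add: field_simps)
    finally have t1: "c * e\<^sup>2 \<le> \<eta> / 3" .
    have t2: "2 * q * xb \<le> \<eta> / 3" using xb(3) q by (simp add: field_simps)
    have "\<beta> * (128 * e + 32 * e\<^sup>2) \<le> \<beta> * (160 * e)" using ee \<beta> by (intro mult_left_mono) auto
    also have "\<beta> * (160 * e) \<le> \<eta> / 3" using e(4) \<beta> by (simp add: field_simps)
    finally have t3: "\<beta> * (128 * e + 32 * e\<^sup>2) \<le> \<eta> / 3" .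
    show ?thesis using t1 t2 t3 unfolding \<rho>_def by simp
  qed
  have e1: "\<epsilon>1 > 0" unfolding \<epsilon>1_def using Pb \<beta> by simp
  have e1xb: "\<epsilon>1 \<le> xb"
  proof -
    have "\<beta> * xb\<^sup>2 \<le> \<beta> * (2 * xb\<^sup>2)" using \<beta> by (intro mult_left_mono) auto
    then have "Pb \<le> \<beta> * (2 * xb\<^sup>2)" using Pb(3) by linarith
    then have "Pb / (2 * \<beta>) \<le> xb\<^sup>2" using \<beta> by (simp add: field_simps)
    then show ?thesis unfolding \<epsilon>1_def using xb by (simp add: real_sqrt_le_iff real_le_lsqrt)
  qed
  have e2: "\<epsilon>2 > 0" unfolding \<epsilon>2_def using Pb by simp
  show ?thesis
  proof (rule exI[of _ \<epsilon>1], rule conjI[OF e1], rule exI[of _ \<epsilon>2], rule conjI[OF e2], intro allI impI conjI)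
    fix a0 s0 :: real
    assume H: "1 - \<epsilon>1 < a0 \<and> a0 < 1 \<and> 0 < s0 \<and> s0 < \<epsilon>2"
    define A where "A = (\<lambda>t. fst (se \<delta> 0 (complex_of_real a0) s0 t))"
    define S where "S = (\<lambda>t. snd (se \<delta> 0 (complex_of_real a0) s0 t))"
    have AS: "A (Suc t) = psi1 (A t) (S t)" "S (Suc t) = psi2 (A t) (S t) \<delta> 0" for t
      by (simp_all add: A_def S_def)
    define P0 where "P0 = s0 + \<beta> * (1 - a0)\<^sup>2"
    have P0: "0 \<le> P0" "P0 < Pb"
    proof -
      show "0 \<le> P0" unfolding P0_def using H \<beta> by simp
      have "(1 - a0)\<^sup>2 < \<epsilon>1\<^sup>2" using H by (intro power_strict_mono) auto
      also have "\<epsilon>1\<^sup>2 = Pb / (2 * \<beta>)" unfolding \<epsilon>1_def using Pb \<beta> by simp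
      finally have "\<beta> * (1 - a0)\<^sup>2 < Pb / 2" using \<beta> by (simp add: field_simps)
      then show "P0 < Pb" unfolding P0_def using H \<epsilon>2_def by simp
    qed
    have inv: "\<exists>a. A t = complex_of_real a \<and> 1/2 \<le> a \<and> a \<le> 1 \<and> 0 \<le> S t
               \<and> S t + \<beta> * (1 - a)\<^sup>2 \<le> \<rho> ^ t * P0" for t
    proof (induction t)
      case 0
      show ?case
        by (rule exI[of _ a0]) (use H e1xb xb in \<open>auto simp: A_def S_def P0_def\<close>)
    next
      case (Suc t)
      then obtain a where a: "A t = complex_of_real a" "1/2 \<le> a" "a \<le> 1" "0 \<le> S t"
        "S t + \<beta> * (1 - a)\<^sup>2 \<le> \<rho> ^ t * P0" by blast
      define s where "s = S t"
      have rt: "\<rho> ^ t \<le> 1" using \<rho> by (simp add: power_le_one)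
      have "\<rho> ^ t * P0 \<le> P0" using rt P0 \<rho> by (intro mult_left_le_one_le) auto
      then have Pl: "s + \<beta> * (1 - a)\<^sup>2 < Pb" using a P0 unfolding s_def by linarith
      have bx: "\<beta> * (1 - a)\<^sup>2 \<ge> 0" using \<beta> by simp
      have s0': "0 \<le> s" "s \<le> e\<^sup>2" using a Pl Pb bx unfolding s_def by linarith+
      have s1: "s \<le> 1" using s0'(2) power_le_one[of e 2] e(1,2) by linarith
      have "\<beta> * (1 - a)\<^sup>2 \<le> \<beta> * xb\<^sup>2" using Pl Pb s0' by linarith
      then have "(1 - a)\<^sup>2 \<le> xb\<^sup>2" using \<beta> by simp
      then have xa: "1 - a \<le> xb" using power2_le_imp_le[of "1 - a" xb] xb(1) by linarith
      define a' where "a' = I1f a s"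
      have A': "A (Suc t) = complex_of_real a'" unfolding AS a(1) a'_def s_def
        using a by (simp add: psi1_real)
      have S': "S (Suc t) = psi2 (complex_of_real a) s \<delta> 0" unfolding AS a(1) s_def ..
      have x1: "a' \<le> 1" "(1 - a')\<^sup>2 \<le> (128 * sqrt s + 32 * s) * s"
        unfolding a'_def using x_step[OF a(2,3) s0'(1) s1] by auto
      have sst: "S (Suc t) \<le> c * ((1 - a)\<^sup>2 + s\<^sup>2) + q * (1 + 2 * (1 - a)) * s"
        unfolding S' c_def q_def using s_step[OF a(2,3) s0'(1) dp] by simp
      have pot: "S (Suc t) + \<beta> * (1 - a')\<^sup>2 \<le> \<rho> * (s + \<beta> * (1 - a)\<^sup>2)"
      proof -
        have x0: "0 \<le> 1 - a" using a(3) by linarith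
        show ?thesis
          by (rule pot_step[OF s0' less_imp_le[OF e(1)] x0 xa less_imp_le[OF q(1)]
                less_imp_le[OF c] less_imp_le[OF \<beta>] sst x1(2) C rb])
      qed
      also have "\<dots> \<le> \<rho> * (\<rho> ^ t * P0)" using a \<rho> unfolding s_def by (intro mult_left_mono) auto
      finally have pot2: "S (Suc t) + \<beta> * (1 - a')\<^sup>2 \<le> \<rho> ^ Suc t * P0" by simp
      have Sn: "0 \<le> S (Suc t)" unfolding S' by (rule psi2_nonneg[OF dp s0'(1)])
      have "\<rho> ^ Suc t * P0 \<le> P0" using \<rho> P0 by (intro mult_left_le_one_le power_le_one) auto
      then have "\<beta> * (1 - a')\<^sup>2 \<le> \<beta> * xb\<^sup>2" using pot2 Sn P0 Pb by linarith
      then have "(1 - a')\<^sup>2 \<le> xb\<^sup>2" using \<beta> by simp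
      then have "1 - a' \<le> xb" using power2_le_imp_le[of "1 - a'" xb] xb(1) by linarith
      then have a'h: "1/2 \<le> a'" using xb by simp
      show ?case using A' a'h x1(1) Sn pot2 by blast
    qed
    have lim0: "(\<lambda>t. \<rho> ^ t * P0) \<longlonglongrightarrow> 0"
      using \<rho> by (intro tendsto_mult_left_zero LIMSEQ_power_zero) auto
    have Sb: "0 \<le> S t \<and> S t \<le> \<rho> ^ t * P0" for t
    proof -
      obtain a where a: "A t = complex_of_real a" "1/2 \<le> a" "a \<le> 1" "0 \<le> S t"
        "S t + \<beta> * (1 - a)\<^sup>2 \<le> \<rho> ^ t * P0" using inv[of t] by blast
      have "\<beta> * (1 - a)\<^sup>2 \<ge> 0" using \<beta> by simp
      then show ?thesis using a by linarith
    qed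
    have Slim: "S \<longlonglongrightarrow> 0"
      by (rule tendsto_sandwich[OF _ _ tendsto_const lim0]) (use Sb in auto)
    have Ab: "norm (A t - 1) \<le> sqrt (\<rho> ^ t * P0 / \<beta>)" for t
    proof -
      obtain a where a: "A t = complex_of_real a" "1/2 \<le> a" "a \<le> 1" "0 \<le> S t"
        "S t + \<beta> * (1 - a)\<^sup>2 \<le> \<rho> ^ t * P0" using inv[of t] by blast
      have "(1 - a)\<^sup>2 \<le> \<rho> ^ t * P0 / \<beta>" using a \<beta> by (simp add: field_simps)
      then have "\<bar>1 - a\<bar> \<le> sqrt (\<rho> ^ t * P0 / \<beta>)" using real_le_rsqrt[of "\<bar>1 - a\<bar>"] by simp
      moreover have "norm (A t - 1) = \<bar>1 - a\<bar>"
      proof -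
        have "A t - 1 = complex_of_real (a - 1)" using a by simp
        then show ?thesis by (metis norm_of_real abs_minus_commute)
      qed
      ultimately show ?thesis by simp
    qed
    have lim1: "(\<lambda>t. sqrt (\<rho> ^ t * P0 / \<beta>)) \<longlonglongrightarrow> 0"
      using tendsto_real_sqrt[OF tendsto_divide_zero[OF lim0, of \<beta>]] by simp
    have "(\<lambda>t. A t - 1) \<longlonglongrightarrow> 0"
      by (rule Lim_null_comparison[OF _ lim1]) (use Ab in auto)
    then have Alim: "A \<longlonglongrightarrow> 1" by (simp add: LIM_zero_iff)
    show "(\<lambda>t. fst (se \<delta> 0 (complex_of_real a0) s0 t)) \<longlonglongrightarrow> 1" using Alim by (simp add: A_def)
    show "(\<lambda>t. snd (se \<delta> 0 (complex_of_real a0) s0 t)) \<longlonglongrightarrow> 0" using Slim by (simp add: S_def)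
  qed
qed


lemma back_step:
  assumes d: "\<delta> > 0" and s: "s \<ge> 0" and h1: "psi1 \<alpha> s = 1" and h2: "psi2 \<alpha> s \<delta> 0 = 0"
  shows "\<alpha> = 1 \<and> s = 0"
proof -
  have an: "\<alpha> \<noteq> 0"
  proof
    assume "\<alpha> = 0"
    then have "psi1 \<alpha> s = 0" by (simp add: psi1_eq I1_a0)
    then show False using h1 by simp
  qed
  then have ap: "cmod \<alpha> > 0" by simp
  have nrm: "norm (psi1 \<alpha> s) = \<bar>I1f (cmod \<alpha>) s\<bar>" by (simp add: psi1_eq norm_mult)
  have s0: "s = 0"
  proof (rule ccontr)
    assume "s \<noteq> 0"
    then have sp: "s > 0" using s by simp
    define R where "R = sqrt ((cmod \<alpha>)\<^sup>2 + s)"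
    have "I1f (cmod \<alpha>) s \<le> 1 - s / (2 * R\<^sup>2)" unfolding R_def by (rule I1_bounds(2)[OF ap sp])
    moreover have "s / (2 * R\<^sup>2) > 0" unfolding R_def using sp ap by (simp add: add_nonneg_pos)
    moreover have "I1f (cmod \<alpha>) s \<ge> 0" by (rule I1_bounds(1)[OF ap sp])
    ultimately have "\<bar>I1f (cmod \<alpha>) s\<bar> < 1" by simp
    then show False using nrm h1 by simp
  qed
  have "4 / \<delta> * (cmod \<alpha> - 1)\<^sup>2 = 0" using h2 s0 by (simp add: psi2_zero)
  then have a1: "cmod \<alpha> = 1" using d by simp
  have "cis (Arg \<alpha>) = 1" using h1 s0 a1 by (simp add: psi1_eq I1_zero)
  then have "sgn \<alpha> = 1" using cis_Arg[OF an] by simp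
  then have "\<alpha> = 1" using a1 by (simp add: sgn_div_norm)
  then show ?thesis using s0 by simp
qed

lemma local_grow:
  assumes d: "0 < \<delta>" "\<delta> < 2"
  defines "q \<equiv> 2 / \<delta>"
  defines "Rb \<equiv> 2 * q / (q + 1)"
  assumes a: "1/2 < cmod \<alpha>" "(cmod \<alpha>)\<^sup>2 + s < Rb\<^sup>2" and s: "0 < s" "sqrt s < (q - 1) / (2 * q * pi)"
  shows "psi2 \<alpha> s \<delta> 0 > s"
proof -
  have q: "q > 1" unfolding q_def using d by simp
  define R where "R = sqrt ((cmod \<alpha>)\<^sup>2 + s)"
  have Rsq: "R\<^sup>2 = (cmod \<alpha>)\<^sup>2 + s" unfolding R_def using s by (simp add: add_nonneg_nonneg)
  have R0: "R \<ge> 0" unfolding R_def using s by (simp add: add_nonneg_nonneg)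
  have Rb0: "Rb > 0" unfolding Rb_def using q by simp
  have RRb: "R < Rb"
  proof (rule ccontr)
    assume "\<not> R < Rb"
    then have "Rb\<^sup>2 \<le> R\<^sup>2" using Rb0 by (intro power_mono) auto
    then show False using a Rsq by simp
  qed
  have Rh: "R > 1/2"
  proof -
    have "cmod \<alpha> \<le> R" unfolding R_def using s by (simp add: real_le_rsqrt)
    then show ?thesis using a by simp
  qed
  have R4: "4 * R\<^sup>2 \<ge> 1"
  proof -
    have "(1/2)\<^sup>2 \<le> R\<^sup>2" using Rh by (intro power_mono) auto
    then show ?thesis by (simp add: power2_eq_square)
  qed
  have Rp: "R > 0" using Rh by simp
  have W: "Wf (cmod \<alpha>) s \<ge> 1 / (2 * R) - pi * sqrt s / (8 * R\<^sup>2)"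
    unfolding R_def by (rule W_bounds(3)[OF norm_ge_zero s(1)])
  have inv: "1 / R > (q + 1) / (2 * q)"
  proof -
    have "1 / Rb < 1 / R" using RRb Rp by (simp add: frac_less2)
    moreover have "1 / Rb = (q + 1) / (2 * q)" unfolding Rb_def by simp
    ultimately show ?thesis by simp
  qed
  have t2: "pi * sqrt s / (4 * R\<^sup>2) \<le> pi * sqrt s"
  proof -
    have "pi * sqrt s \<ge> 0" using s by simp
    then show ?thesis using R4 by (simp add: divide_le_eq mult_le_cancel_left1 mult_le_cancel_left2 mult_left_le)
  qed
  have t3: "q * (pi * sqrt s) < (q - 1) / 2"
  proof -
    have "q * pi * sqrt s < q * pi * ((q - 1) / (2 * q * pi))" using s q by (intro mult_strict_left_mono) auto
    also have "\<dots> = (q - 1) / 2" using q by (simp add: field_simps)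
    finally show ?thesis by (simp add: mult.assoc)
  qed
  have key: "q * (1 / R - pi * sqrt s / (4 * R\<^sup>2)) > 1"
  proof -
    have "q * (1 / R - pi * sqrt s / (4 * R\<^sup>2)) \<ge> q * (1 / R - pi * sqrt s)"
      using t2 q by (intro mult_left_mono) auto
    moreover have "q * (1 / R - pi * sqrt s) > q * ((q + 1) / (2 * q) - pi * sqrt s)"
      using inv q by (intro mult_strict_left_mono) auto
    moreover have "q * ((q + 1) / (2 * q) - pi * sqrt s) = (q + 1) / 2 - q * (pi * sqrt s)"
      using q by (simp add: field_simps)
    ultimately show ?thesis using t3 by argo
  qed
  have "psi2 \<alpha> s \<delta> 0 = 4 / \<delta> * ((R - 1)\<^sup>2 + s * Wf (cmod \<alpha>) s)"
    unfolding R_def by (rule psi2_pos[OF s(1)])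
  also have "\<dots> \<ge> 4 / \<delta> * (s * Wf (cmod \<alpha>) s)"
    using d by (intro mult_left_mono) auto
  finally have p1: "psi2 \<alpha> s \<delta> 0 \<ge> 4 / \<delta> * (s * Wf (cmod \<alpha>) s)" .
  have "4 / \<delta> * (s * Wf (cmod \<alpha>) s) \<ge> 4 / \<delta> * (s * (1 / (2 * R) - pi * sqrt s / (8 * R\<^sup>2)))"
    using W d s by (intro mult_left_mono) auto
  moreover have "4 / \<delta> * (s * (1 / (2 * R) - pi * sqrt s / (8 * R\<^sup>2))) = s * (q * (1 / R - pi * sqrt s / (4 * R\<^sup>2)))"
    unfolding q_def using Rp d by (simp add: field_simps)
  moreover have "s * (q * (1 / R - pi * sqrt s / (4 * R\<^sup>2))) > s * 1"
    using key s by (intro mult_strict_left_mono) auto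
  ultimately show ?thesis using p1 by linarith
qed


lemma partB:
  assumes d: "0 < \<delta>" "\<delta> < 2" and s0: "0 \<le> s0"
    and LA: "(\<lambda>t. fst (se \<delta> 0 \<alpha>0 s0 t)) \<longlonglongrightarrow> 1"
    and LS: "(\<lambda>t. snd (se \<delta> 0 \<alpha>0 s0 t)) \<longlonglongrightarrow> 0"
  shows "\<alpha>0 = 1 \<and> s0 = 0"
proof -
  define A where "A = (\<lambda>t. fst (se \<delta> 0 \<alpha>0 s0 t))"
  define S where "S = (\<lambda>t. snd (se \<delta> 0 \<alpha>0 s0 t))"
  have AS: "A (Suc t) = psi1 (A t) (S t)" "S (Suc t) = psi2 (A t) (S t) \<delta> 0" for t
    by (simp_all add: A_def S_def)
  have A0: "A 0 = \<alpha>0" "S 0 = s0" by (simp_all add: A_def S_def)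
  have LA': "A \<longlonglongrightarrow> 1" using LA unfolding A_def .
  have LS': "S \<longlonglongrightarrow> 0" using LS unfolding S_def .
  have Snn: "S t \<ge> 0" for t
  proof (induction t)
    case 0 then show ?case using s0 A0 by simp
  next
    case (Suc t) then show ?case unfolding AS by (rule psi2_nonneg[OF d(1)])
  qed
  define q where "q = 2 / \<delta>"
  define Rb where "Rb = 2 * q / (q + 1)"
  define K where "K = (q - 1) / (2 * q * pi)"
  have q: "q > 1" unfolding q_def using d by simp
  have Rb1: "Rb > 1" unfolding Rb_def using q by simp
  have Rb2: "Rb\<^sup>2 > 1" using Rb1 by (simp add: one_less_power)
  have K: "K > 0" unfolding K_def using q by simp
  have LN: "(\<lambda>t. cmod (A t)) \<longlonglongrightarrow> 1" using tendsto_norm[OF LA'] by simp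
  have LN2: "(\<lambda>t. (cmod (A t))\<^sup>2) \<longlonglongrightarrow> 1" using tendsto_power[OF LN, of 2] by simp
  have ev: "eventually (\<lambda>t. 1/2 < cmod (A t) \<and> (cmod (A t))\<^sup>2 < (1 + Rb\<^sup>2) / 2
            \<and> S t < (Rb\<^sup>2 - 1) / 2 \<and> S t < K\<^sup>2) sequentially"
  proof (intro eventually_conj)
    show "eventually (\<lambda>t. 1/2 < cmod (A t)) sequentially" by (rule order_tendstoD(1)[OF LN]) simp
    show "eventually (\<lambda>t. (cmod (A t))\<^sup>2 < (1 + Rb\<^sup>2) / 2) sequentially"
      by (rule order_tendstoD(2)[OF LN2]) (use Rb2 in simp)
    show "eventually (\<lambda>t. S t < (Rb\<^sup>2 - 1) / 2) sequentially"
      by (rule order_tendstoD(2)[OF LS']) (use Rb2 in simp)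
    show "eventually (\<lambda>t. S t < K\<^sup>2) sequentially"
      by (rule order_tendstoD(2)[OF LS']) (use K in simp)
  qed
  then obtain N where N: "\<And>t. t \<ge> N \<Longrightarrow> 1/2 < cmod (A t) \<and> (cmod (A t))\<^sup>2 < (1 + Rb\<^sup>2) / 2
            \<and> S t < (Rb\<^sup>2 - 1) / 2 \<and> S t < K\<^sup>2"
    unfolding eventually_sequentially by blast
  have grow: "S (Suc t) > S t" if t: "t \<ge> N" and sp: "S t > 0" for t
  proof -
    note n = N[OF t]
    have "sqrt (S t) < sqrt (K\<^sup>2)" using n by (simp only: real_sqrt_less_iff)
    then have sk: "sqrt (S t) < K" using K by simp
    have "(cmod (A t))\<^sup>2 + S t < Rb\<^sup>2" using n by simp
    then show ?thesis unfolding AS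
      by (intro local_grow[OF d, folded q_def, folded Rb_def]) (use n sp sk K_def in auto)
  qed
  have Sz: "S t = 0" if t: "t \<ge> N" for t
  proof (rule ccontr)
    assume "S t \<noteq> 0"
    then have sp: "S t > 0" using Snn[of t] by simp
    have mono: "S (t + k) \<ge> S t" for k
    proof (induction k)
      case 0 then show ?case by simp
    next
      case (Suc k)
      have "S (Suc (t + k)) > S (t + k)" by (rule grow) (use t Suc sp in auto)
      then show ?case using Suc by simp
    qed
    have "eventually (\<lambda>n. S n < S t) sequentially" by (rule order_tendstoD(2)[OF LS' sp])
    then obtain M where "\<And>n. n \<ge> M \<Longrightarrow> S n < S t" unfolding eventually_sequentially by blast
    then have "S (t + M) < S t" by simp
    then show False using mono[of M] by simp
  qed
  have stable: "cmod (A t) = 1 \<and> A (Suc t) = A t" if t: "t \<ge> N" for t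
  proof -
    have "S (Suc t) = 0" using t by (intro Sz) auto
    then have "4 / \<delta> * (cmod (A t) - 1)\<^sup>2 = 0" unfolding AS Sz[OF t] psi2_zero .
    then have c1: "cmod (A t) = 1" using d by simp
    then have an: "A t \<noteq> 0" by auto
    have "A (Suc t) = cis (Arg (A t))" unfolding AS Sz[OF t] psi1_eq c1 I1_zero[OF zero_less_one] by simp
    also have "\<dots> = sgn (A t)" by (rule cis_Arg[OF an])
    also have "\<dots> = A t" using c1 by (simp add: sgn_div_norm)
    finally show ?thesis using c1 by simp
  qed
  have const: "A (k + N) = A N" for k
  proof (induction k)
    case 0 then show ?case by simp
  next
    case (Suc k)
    have "A (Suc (k + N)) = A (k + N)" using stable[of "k + N"] by simp
    then show ?case using Suc by simp
  qed
  have "(\<lambda>k. A (k + N)) \<longlonglongrightarrow> 1" by (rule LIMSEQ_ignore_initial_segment[OF LA'])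
  then have "(\<lambda>k. A N) \<longlonglongrightarrow> 1" unfolding const .
  then have AN: "A N = 1" using LIMSEQ_unique[OF tendsto_const] by blast
  have down: "A (N - k) = 1 \<and> S (N - k) = 0" if "k \<le> N" for k
    using that
  proof (induction k)
    case 0 then show ?case using AN Sz[of N] by simp
  next
    case (Suc k)
    define m where "m = N - Suc k"
    have m: "Suc m = N - k" using Suc.prems unfolding m_def by simp
    have h: "A (Suc m) = 1 \<and> S (Suc m) = 0" unfolding m using Suc by simp
    have "A m = 1 \<and> S m = 0"
      by (rule back_step[OF d(1) Snn]) (use h AS in auto)
    then show ?case unfolding m_def .
  qed
  from down[of N] show ?thesis using A0 by simp
qed

theorem mainTheorem2:
  shows "psi1 1 0 = 1
    \<and> (\<forall>\<delta>>0. psi2 1 0 \<delta> 0 = 0)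
    \<and> (\<forall>\<delta>>2. \<exists>\<epsilon>1>0. \<exists>\<epsilon>2>0. \<forall>a0::real. \<forall>s0::real.
          1 - \<epsilon>1 < a0 \<and> a0 < 1 \<and> 0 < s0 \<and> s0 < \<epsilon>2 \<longrightarrow>
            ((\<lambda>t. fst (se \<delta> 0 (complex_of_real a0) s0 t)) \<longlonglongrightarrow> 1)
            \<and> ((\<lambda>t. snd (se \<delta> 0 (complex_of_real a0) s0 t)) \<longlonglongrightarrow> 0))
    \<and> (\<forall>\<delta>. 0 < \<delta> \<and> \<delta> < 2 \<longrightarrow> (\<forall>\<alpha>0::complex. \<forall>s0::real.
          0 \<le> s0 \<and> (\<alpha>0, s0) \<noteq> (0, 0)
          \<and> ((\<lambda>t. fst (se \<delta> 0 \<alpha>0 s0 t)) \<longlonglongrightarrow> 1)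
          \<and> ((\<lambda>t. snd (se \<delta> 0 \<alpha>0 s0 t)) \<longlonglongrightarrow> 0)
          \<longrightarrow> \<alpha>0 = 1 \<and> s0 = 0))"
proof -
  have c1: "psi1 1 0 = 1" using psi1_real[OF zero_less_one, of 0] I1_zero[OF zero_less_one] by simp
  have c2: "\<forall>\<delta>>0. psi2 1 0 \<delta> 0 = 0" by (simp add: psi2_zero)
  have c3: "\<forall>\<delta>>2. \<exists>\<epsilon>1>0. \<exists>\<epsilon>2>0. \<forall>a0::real. \<forall>s0::real.
          1 - \<epsilon>1 < a0 \<and> a0 < 1 \<and> 0 < s0 \<and> s0 < \<epsilon>2 \<longrightarrow>
            ((\<lambda>t. fst (se \<delta> 0 (complex_of_real a0) s0 t)) \<longlonglongrightarrow> 1)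
            \<and> ((\<lambda>t. snd (se \<delta> 0 (complex_of_real a0) s0 t)) \<longlonglongrightarrow> 0)"
    using partA by blast
  have c4: "\<forall>\<delta>. 0 < \<delta> \<and> \<delta> < 2 \<longrightarrow> (\<forall>\<alpha>0::complex. \<forall>s0::real.
          0 \<le> s0 \<and> (\<alpha>0, s0) \<noteq> (0, 0)
          \<and> ((\<lambda>t. fst (se \<delta> 0 \<alpha>0 s0 t)) \<longlonglongrightarrow> 1)
          \<and> ((\<lambda>t. snd (se \<delta> 0 \<alpha>0 s0 t)) \<longlonglongrightarrow> 0)
          \<longrightarrow> \<alpha>0 = 1 \<and> s0 = 0)"
    using partB by blast
  show ?thesis using c1 c2 c3 c4 by blast
qed

end
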